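(* Let $0<\alpha<1$ and let a collection of $m$ p-values be partitioned into $n\ge1$ disjoint chunks $\mathcal C_1,\dots,\mathcal C_n$ of sizes $m_{\mathcal C_1},\dots,m_{\mathcal C_n}$, $\sum_i m_{\mathcal C_i}=m$. Then the set of p-values marked significant by the FastLSU multi-chunk algorithm (defined in the context) at level $\alpha$ is exactly the set of p-values rejected by the Benjamini–Hochberg LSU procedure at level $\alpha$ applied to the single batch $\mathcal C=\bigcup_{i=1}^n\mathcal C_i$ of all $m$ p-values.
   Context: The LSU procedure at level $\alpha$ on $m$ p-values: with $p_{(1)}\le\cdots\le p_{(m)}$ the sorted p-values, let $r=\max\{i:\ p_{(i)}<i\alpha/m\}$ ($r=0$ if none) and reject all p-values $<r\alpha/m$. The FastLSU multi-chunk algorithm: Step 1: in each chunk $\mathcal C_i$ count the p-values $<\alpha$, call this count $r^{(1)}_{i}$. Step $k+1$ ($k\ge1$): in each chunk $\mathcal C_i$ count the p-values $<\big(\sum_{j=1}^n r^{(k)}_{j}\big)\alpha/m$, call this count $r^{(k+1)}_{i}$. Repeat until $\sum_j r^{(k+1)}_j=\sum_j r^{(k)}_j$ (or $k+1=m$), and mark as significant the p-values counted in the final step, i.e. all p-values $<\big(\sum_j r^{(k)}_j\big)\alpha/m$. Note that all thresholds use the global number $m$ of p-values, not the chunk sizes. *)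

theory Defs
  imports Main "HOL.Real"
begin

text \<open>p-values are indexed by 0..m-1, given by p :: nat => real.
  Chunks are C 1, ..., C n, a partition of {..<m}.\<close>

text \<open>LSU (Benjamini-Hochberg) procedure on the single batch of all m p-values:
  sorted p-values p_(1) <= ... <= p_(m) are ps!0, ..., ps!(m-1);
  r = max {i. p_(i) < i alpha/m} (0 if none); reject all p-values < r alpha/m.\<close>
definition lsu_r :: "real \<Rightarrow> nat \<Rightarrow> (nat \<Rightarrow> real) \<Rightarrow> nat" where
  "lsu_r \<alpha> m p =
     (let ps = sort (map p [0..<m])
      in Max (insert 0 {i \<in> {1..m}. ps ! (i - 1) < real i * \<alpha> / real m}))"

definition lsu_rejected :: "real \<Rightarrow> nat \<Rightarrow> (nat \<Rightarrow> real) \<Rightarrow> nat set" where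
  "lsu_rejected \<alpha> m p = {j \<in> {..<m}. p j < real (lsu_r \<alpha> m p) * \<alpha> / real m}"

text \<open>FastLSU: fastlsu_r alpha m p n C k i is the count r^(k)_i of step k >= 1 in chunk i.
  (Step index 0 is unused.)\<close>
fun fastlsu_r :: "real \<Rightarrow> nat \<Rightarrow> (nat \<Rightarrow> real) \<Rightarrow> nat \<Rightarrow> (nat \<Rightarrow> nat set) \<Rightarrow> nat \<Rightarrow> nat \<Rightarrow> nat" where
  "fastlsu_r \<alpha> m p n C 0 i = 0"
| "fastlsu_r \<alpha> m p n C (Suc 0) i = card {j \<in> C i. p j < \<alpha>}"
| "fastlsu_r \<alpha> m p n C (Suc (Suc k)) i =
     card {j \<in> C i. p j < real (\<Sum>l = 1..n. fastlsu_r \<alpha> m p n C (Suc k) l) * \<alpha> / real m}"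

definition fastlsu_S :: "real \<Rightarrow> nat \<Rightarrow> (nat \<Rightarrow> real) \<Rightarrow> nat \<Rightarrow> (nat \<Rightarrow> nat set) \<Rightarrow> nat \<Rightarrow> nat" where
  "fastlsu_S \<alpha> m p n C k = (\<Sum>l = 1..n. fastlsu_r \<alpha> m p n C k l)"

definition fastlsu_stop :: "real \<Rightarrow> nat \<Rightarrow> (nat \<Rightarrow> real) \<Rightarrow> nat \<Rightarrow> (nat \<Rightarrow> nat set) \<Rightarrow> nat" where
  "fastlsu_stop \<alpha> m p n C =
     (LEAST k. 1 \<le> k \<and> (fastlsu_S \<alpha> m p n C (Suc k) = fastlsu_S \<alpha> m p n C k \<or> Suc k = m))"

text \<open>Marked significant: the p-values counted in the final step k+1, i.e. those
  (in some chunk) below S(k) alpha / m.\<close>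
definition fastlsu_marked :: "real \<Rightarrow> nat \<Rightarrow> (nat \<Rightarrow> real) \<Rightarrow> nat \<Rightarrow> (nat \<Rightarrow> nat set) \<Rightarrow> nat set" where
  "fastlsu_marked \<alpha> m p n C =
     {j. \<exists>i \<in> {1..n}. j \<in> C i \<and>
        p j < real (fastlsu_S \<alpha> m p n C (fastlsu_stop \<alpha> m p n C)) * \<alpha> / real m}"

end

theory Submission
  imports Defs "HOL-Library.Multiset"
begin

lemma count_sorted:
  fixes ps :: "real list"
  assumes s: "sorted ps" and i1: "1 \<le> i" and il: "i \<le> length ps"
  shows "ps!(i-1) < t \<longleftrightarrow> i \<le> length (filter (\<lambda>x. x < t) ps)"
proof
  assume h: "ps!(i-1) < t"
  have "{..<i} \<subseteq> {q. q < length ps \<and> ps!q < t}"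
  proof
    fix q assume "q \<in> {..<i}"
    hence "q \<le> i - 1" "i - 1 < length ps" using i1 il by auto
    hence "ps!q \<le> ps!(i-1)" using sorted_nth_mono[OF s] by blast
    thus "q \<in> {q. q < length ps \<and> ps!q < t}" using h \<open>q \<le> i-1\<close> \<open>i-1 < length ps\<close> by auto
  qed
  hence "card {..<i} \<le> card {q. q < length ps \<and> ps!q < t}"
    by (intro card_mono) auto
  thus "i \<le> length (filter (\<lambda>x. x < t) ps)" by (simp add: length_filter_conv_card)
next
  assume h: "i \<le> length (filter (\<lambda>x. x < t) ps)"
  show "ps!(i-1) < t"
  proof (rule ccontr)
    assume "\<not> ps!(i-1) < t"
    have "{q. q < length ps \<and> ps!q < t} \<subseteq> {..<i-1}"
    proof
      fix q assume q: "q \<in> {q. q < length ps \<and> ps!q < t}"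
      show "q \<in> {..<i-1}"
      proof (rule ccontr)
        assume "q \<notin> {..<i-1}"
        hence "ps!(i-1) \<le> ps!q" using sorted_nth_mono[OF s] q by auto
        thus False using q \<open>\<not> ps!(i-1) < t\<close> by auto
      qed
    qed
    hence "card {q. q < length ps \<and> ps!q < t} \<le> i - 1"
      by (metis card_lessThan card_mono finite_lessThan)
    thus False using h i1 by (simp add: length_filter_conv_card)
  qed
qed

lemma N_sort: "length (filter (\<lambda>x. x < t) (sort (map p [0..<m]))) = card {j\<in>{..<m}. (p j::real) < t}"
proof -
  have "length (filter (\<lambda>x. x < t) (sort (map p [0..<m]))) = length (filter (\<lambda>x. x < t) (map p [0..<m]))"
    by (metis mset_filter mset_sort size_mset)
  also have "\<dots> = length (filter (\<lambda>j. p j < t) [0..<m])" by (simp add: filter_map comp_def)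
  also have "\<dots> = card (set (filter (\<lambda>j. p j < t) [0..<m]))"
    by (metis distinct_card distinct_filter distinct_upt)
  also have "set (filter (\<lambda>j. p j < t) [0..<m]) = {j\<in>{..<m}. p j < t}" by auto
  finally show ?thesis .
qed

theorem theorem3:
  fixes \<alpha> :: real and m n :: nat and p :: "nat \<Rightarrow> real" and C :: "nat \<Rightarrow> nat set"
  assumes "0 < \<alpha>" and "\<alpha> < 1"
    and "n \<ge> 1"
    and "\<forall>j < m. 0 \<le> p j \<and> p j \<le> 1"
    and "\<forall>i \<in> {1..n}. C i \<subseteq> {..<m}"
    and "\<forall>i \<in> {1..n}. \<forall>i' \<in> {1..n}. i \<noteq> i' \<longrightarrow> C i \<inter> C i' = {}"
    and "(\<Union>i \<in> {1..n}. C i) = {..<m}"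
  shows "fastlsu_marked \<alpha> m p n C = lsu_rejected \<alpha> m p"
proof -
  note a = assms
  have marked: "fastlsu_marked \<alpha> m p n C =
     {j\<in>{..<m}. p j < real (fastlsu_S \<alpha> m p n C (fastlsu_stop \<alpha> m p n C)) * \<alpha> / real m}"
    unfolding fastlsu_marked_def using a(7) by blast
  show ?thesis
  proof (cases "m = 0")
    case True
    thus ?thesis unfolding marked lsu_rejected_def by simp
  next
    case False
    hence mpos: "0 < m" by simp
    define N where "N t = card {j\<in>{..<m}. p j < t}" for t
    define g where "g i = N (real i * \<alpha> / real m)" for i :: nat
    have Nle: "N t \<le> m" for t unfolding N_def
      by (metis (no_types, lifting) card_lessThan card_mono finite_lessThan mem_Collect_eq subsetI)
    have Nmono: "s \<le> t \<Longrightarrow> N s \<le> N t" for s t unfolding N_def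
      by (intro card_mono) auto
    have gmono: "i \<le> j \<Longrightarrow> g i \<le> g j" for i j unfolding g_def
      using a(1) mpos by (intro Nmono divide_right_mono mult_right_mono) auto
    have gle: "g i \<le> m" for i unfolding g_def using Nle by simp
    define R where "R = {i \<in> {1..m}. i \<le> g i}"
    have rdef: "lsu_r \<alpha> m p = Max (insert 0 R)"
    proof -
      have "{i \<in> {1..m}. sort (map p [0..<m]) ! (i - 1) < real i * \<alpha> / real m} = R"
        unfolding R_def g_def N_def
        using count_sorted[of "sort (map p [0..<m])"] N_sort[of _ p m] by auto
      thus ?thesis unfolding lsu_r_def Let_def by simp
    qed
    define r where "r = lsu_r \<alpha> m p"
    have finR: "finite (insert 0 R)" unfolding R_def by auto
    have Rbound: "\<And>i. i \<in> R \<Longrightarrow> i \<le> r" unfolding r_def rdef using finR by auto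
    have rmem: "r \<in> insert 0 R" unfolding r_def rdef using finR by (intro Max_in) auto
    have r_le_g: "r \<le> g r" using rmem unfolding R_def by auto
    have rm: "r \<le> m" using rmem unfolding R_def by auto
    have gr: "g r = r"
    proof -
      have "g r \<le> g (g r)" using gmono[OF r_le_g] .
      hence "g r = 0 \<or> g r \<in> R" unfolding R_def using gle[of r] by auto
      hence "g r \<le> r" using Rbound by auto
      thus ?thesis using r_le_g by simp
    qed
    have fix_le_r: "g i = i \<Longrightarrow> i \<le> r" for i
    proof -
      assume "g i = i"
      hence "i = 0 \<or> i \<in> R" unfolding R_def using gle[of i] by (metis atLeastAtMost_iff le_refl less_one mem_Collect_eq not_le)
      thus "i \<le> r" using Rbound by auto
    qed
    define T where "T k = (g ^^ k) m" for k
    have TS: "T (Suc k) = g (T k)" for k unfolding T_def by simp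
    have T0: "T 0 = m" unfolding T_def by simp
    have fin: "\<And>i. i \<in> {1..n} \<Longrightarrow> finite (C i)" using a(5) finite_subset by blast
    have sumN: "(\<Sum>l = 1..n. card {j \<in> C l. p j < t}) = N t" for t
    proof -
      have "(\<Sum>l = 1..n. card {j \<in> C l. p j < t}) = card (\<Union>l\<in>{1..n}. {j \<in> C l. p j < t})"
        by (rule card_UN_disjoint[symmetric]) (use fin a(6) in auto)
      also have "(\<Union>l\<in>{1..n}. {j \<in> C l. p j < t}) = {j\<in>{..<m}. p j < t}"
        using a(7) by blast
      finally show ?thesis unfolding N_def .
    qed
    have ST: "fastlsu_S \<alpha> m p n C (Suc k) = T (Suc k)" for k
    proof (induction k)
      case 0
      have "fastlsu_S \<alpha> m p n C (Suc 0) = N \<alpha>" unfolding fastlsu_S_def using sumN by simp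
      also have "N \<alpha> = g m" unfolding g_def using mpos by simp
      finally show ?case using TS T0 by simp
    next
      case (Suc k)
      have "fastlsu_S \<alpha> m p n C (Suc (Suc k)) = N (real (fastlsu_S \<alpha> m p n C (Suc k)) * \<alpha> / real m)"
        unfolding fastlsu_S_def using sumN by simp
      also have "\<dots> = g (T (Suc k))" using Suc unfolding g_def by simp
      finally show ?case using TS by simp
    qed
    have Tdec: "T (Suc k) \<le> T k" for k
    proof (induction k)
      case 0 then show ?case using TS T0 gle by simp
    next
      case (Suc k) then show ?case using TS gmono by simp
    qed
    have Tge: "r \<le> T k" for k
    proof (induction k)
      case 0 then show ?case using T0 rm by simp
    next
      case (Suc k) then show ?case using TS gmono[OF Suc] gr by simp
    qed
    have strict: "(\<forall>j<K. T (Suc j) \<noteq> T j) \<Longrightarrow> T K + K \<le> m" for K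
    proof (induction K)
      case 0 then show ?case using T0 by simp
    next
      case (Suc K)
      hence "T K + K \<le> m" "T (Suc K) < T K" using Tdec[of K] by auto
      thus ?case by simp
    qed
    define P where "P k = (1 \<le> k \<and> (T (Suc k) = T k \<or> Suc k = m))" for k
    have stop_eq: "fastlsu_stop \<alpha> m p n C = (LEAST k. P k)"
    proof -
      have "\<And>k. (1 \<le> k \<and> (fastlsu_S \<alpha> m p n C (Suc k) = fastlsu_S \<alpha> m p n C k \<or> Suc k = m)) = P k"
        unfolding P_def by (metis One_nat_def Suc_le_D ST)
      thus ?thesis unfolding fastlsu_stop_def by simp
    qed
    have exP: "\<exists>k. P k"
    proof -
      obtain k where k: "k \<le> m" "T (Suc k) = T k"
        using strict[of "Suc m"] by (metis add_le_same_cancel2 le_add2 less_Suc_eq_le not_less_eq_eq zero_less_Suc le_trans)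
      show ?thesis
      proof (cases "k = 0")
        case True
        hence "T 2 = T 1" using k TS by (simp add: numeral_2_eq_2)
        thus ?thesis unfolding P_def by (metis One_nat_def Suc_1 le_refl)
      next
        case False hence "1 \<le> k" by simp
        thus ?thesis using k unfolding P_def by blast
      qed
    qed
    define k0 where "k0 = (LEAST k. P k)"
    have Pk0: "P k0" unfolding k0_def using exP by (metis LeastI)
    have mink: "j < k0 \<Longrightarrow> \<not> P j" for j unfolding k0_def using not_less_Least by blast
    have key: "T (Suc k0) = r"
    proof (cases "T (Suc k0) = T k0")
      case True
      hence "g (T k0) = T k0" using TS by simp
      hence "T k0 \<le> r" using fix_le_r by blast
      thus ?thesis using True Tge[of k0] by simp
    next
      case False
      hence sk: "Suc k0 = m" "1 \<le> k0" using Pk0 unfolding P_def by auto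
      have "\<forall>j<Suc k0. T (Suc j) \<noteq> T j"
      proof (intro allI impI)
        fix j assume j: "j < Suc k0"
        show "T (Suc j) \<noteq> T j"
        proof
          assume eq: "T (Suc j) = T j"
          show False
          proof (cases "j = 0")
            case True
            hence "T 2 = T 1" using eq TS by (simp add: numeral_2_eq_2)
            hence "P 1" unfolding P_def by (simp add: numeral_2_eq_2)
            thus False using mink[of 1] sk False \<open>T 2 = T 1\<close>
              by (metis One_nat_def Suc_1 le_neq_implies_less)
          next
            case jf: False
            show False
            proof (cases "j = k0")
              case True thus False using eq False by simp
            next
              case f2: False
              hence "j < k0" using j by simp
              moreover have "P j" unfolding P_def using eq jf by simp
              ultimately show False using mink by blast
            qed
          qed
        qed
      qed
      hence "T (Suc k0) + Suc k0 \<le> m" using strict by blast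
      hence "T (Suc k0) = 0" using sk by simp
      thus ?thesis using Tge[of "Suc k0"] by simp
    qed
    define A where "A = {j\<in>{..<m}. p j < real (T k0) * \<alpha> / real m}"
    define B where "B = {j\<in>{..<m}. p j < real r * \<alpha> / real m}"
    have k0pos: "1 \<le> k0" using Pk0 unfolding P_def by simp
    have SA: "fastlsu_S \<alpha> m p n C (fastlsu_stop \<alpha> m p n C) = T k0"
      using ST[of "k0 - 1"] k0pos stop_eq k0_def by simp
    have cardA: "card A = r" using key TS unfolding A_def g_def N_def by simp
    have cardB: "card B = r" using gr unfolding B_def g_def N_def by simp
    have BA: "B \<subseteq> A" unfolding A_def B_def
    proof safe
      fix j assume "p j < real r * \<alpha> / real m"
      moreover have "real r * \<alpha> / real m \<le> real (T k0) * \<alpha> / real m"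
        using Tge[of k0] a(1) mpos by (intro divide_right_mono mult_right_mono) auto
      ultimately show "p j < real (T k0) * \<alpha> / real m" by linarith
    qed
    have "B = A" using card_subset_eq[OF _ BA] cardA cardB unfolding A_def by simp
    thus ?thesis unfolding marked SA lsu_rejected_def r_def[symmetric] A_def B_def by simp
  qed
qed

end
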